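(* Let $\alpha_1,\dots,\alpha_n,\alpha'_1,\dots,\alpha'_n\in\mathcal R^n$ be such that the representations $\bigoplus_{i=1}^n\chi^{\alpha_i}$ and $\bigoplus_{i=1}^n\chi^{\alpha'_i}$ of $(\mathbb C^* )^n$ on $\mathbb C^n$ are faithful, and let $\{\beta_i\}$ (resp. $\{\beta'_i\}$) be dual to $\{\alpha_i\}$ (resp. $\{\alpha'_i\}$), i.e. $\langle\alpha_i,\beta_j\rangle=\delta_{ij}\mathbf 1$. (1) The two representation spaces are equivariantly diffeomorphic if and only if there is a permutation $\sigma$ of $\{1,\dots,n\}$ such that $\beta'_{\sigma(i)}=\beta_i$ or $\beta'_{\sigma(i)}=\beta_i\mu_0$ for every $i$, where $\mu_0=\begin{bmatrix}1&0\\0&-1\end{bmatrix}$. (2) The two representation spaces are equivariantly homeomorphic if and only if there are a permutation $\sigma$ of $\{1,\dots,n\}$ and elements $\mu_i\in\mathcal S:=\{\begin{bmatrix} b&0\\ c&v\end{bmatrix}\in\mathcal R: b>0,\ v=\pm1\}$ such that $\beta'_{\sigma(i)}=\beta_i\mu_i$ for every $i$.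
   Context: $\mathcal R$ is the ring of real $2\times2$ matrices $\begin{bmatrix} b&0\\ c&v\end{bmatrix}$ with $b,c\in\mathbb R$, $v\in\mathbb Z$, identified with $\mathbb C\times\mathbb Z$ via $(b+\sqrt{-1}c,v)$; $\mathbf 1$ is the identity matrix. For $g\in\mathbb C^*$ and $\mu=(b+\sqrt{-1}c,v)$, $g^\mu:=|g|^{b+\sqrt{-1}c}(g/|g|)^v$; then $(g^{\mu_1})^{\mu_2}=g^{\mu_2\mu_1}$ (matrix product). For $\alpha=(\alpha^1,\dots,\alpha^n)$, $\beta=(\beta^1,\dots,\beta^n)\in\mathcal R^n$: $\chi^\alpha(g_1,\dots,g_n)=\prod_k g_k^{\alpha^k}$, $\langle\alpha,\beta\rangle=\sum_k\alpha^k\beta^k\in\mathcal R$, and $\beta\mu=(\beta^1\mu,\dots,\beta^n\mu)$ for $\mu\in\mathcal R$. The representation $\bigoplus_i\chi^{\alpha_i}$ acts on $\mathbb C^n$ by $g\cdot(z_1,\dots,z_n)=(\chi^{\alpha_1}(g)z_1,\dots,\chi^{\alpha_n}(g)z_n)$; a dual set exists when the representation is faithful. *)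

theory Defs
  imports "HOL-Analysis.Analysis"
begin

text \<open>Elements of the ring R: the matrix [b 0; c v] is encoded as (b + i c, v).\<close>
type_synonym rr = "complex \<times> int"

definition rmult :: "rr \<Rightarrow> rr \<Rightarrow> rr" where
  "rmult x y = (Complex (Re (fst x) * Re (fst y))
                        (Im (fst x) * Re (fst y) + of_int (snd x) * Im (fst y)),
                snd x * snd y)"

definition radd :: "rr \<Rightarrow> rr \<Rightarrow> rr" where
  "radd x y = (fst x + fst y, snd x + snd y)"

definition rzero :: rr where "rzero = (0, 0)"
definition rone :: rr where "rone = (1, 1)"

definition mu0 :: rr where "mu0 = (1, -1)"

definition Sset :: "rr set" where
  "Sset = {x. Re (fst x) > 0 \<and> (snd x = 1 \<or> snd x = -1)}"

definition cpow :: "complex \<Rightarrow> rr \<Rightarrow> complex" where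
  "cpow g mu = exp (fst mu * complex_of_real (ln (norm g))) * (sgn g) powi (snd mu)"

definition rinner :: "rr^'n::finite \<Rightarrow> rr^'n \<Rightarrow> rr" where
  "rinner a b = ((\<Sum>k\<in>UNIV. fst (rmult (a$k) (b$k))), (\<Sum>k\<in>UNIV. snd (rmult (a$k) (b$k))))"

definition rvmult :: "rr^'n \<Rightarrow> rr \<Rightarrow> rr^'n" where
  "rvmult b mu = (\<chi> k. rmult (b$k) mu)"

definition chr :: "rr^'n::finite \<Rightarrow> complex^'n \<Rightarrow> complex" where
  "chr a g = (\<Prod>k\<in>UNIV. cpow (g$k) (a$k))"

definition torus :: "(complex^'n) set" where
  "torus = {g. \<forall>k. g$k \<noteq> 0}"

definition act :: "(rr^'n::finite)^'n \<Rightarrow> complex^'n \<Rightarrow> complex^'n \<Rightarrow> complex^'n" where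
  "act A g z = (\<chi> i. chr (A$i) g * z$i)"

definition faithful :: "(rr^'n::finite)^'n \<Rightarrow> bool" where
  "faithful A \<longleftrightarrow> (\<forall>g\<in>torus. (\<forall>z. act A g z = z) \<longrightarrow> g = 1)"

definition dual :: "(rr^'n::finite)^'n \<Rightarrow> (rr^'n)^'n \<Rightarrow> bool" where
  "dual A B \<longleftrightarrow> (\<forall>i j. rinner (A$i) (B$j) = (if i = j then rone else rzero))"

definition equivariant :: "(rr^'n::finite)^'n \<Rightarrow> (rr^'n)^'n \<Rightarrow> (complex^'n \<Rightarrow> complex^'n) \<Rightarrow> bool" where
  "equivariant A A' f \<longleftrightarrow> (\<forall>g\<in>torus. \<forall>z. f (act A g z) = act A' g (f z))"

fun Ck :: "nat \<Rightarrow> ('a::real_normed_vector \<Rightarrow> 'b::real_normed_vector) \<Rightarrow> bool" where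
  "Ck 0 f = continuous_on UNIV f"
| "Ck (Suc k) f = ((\<forall>x. f differentiable (at x)) \<and>
                    (\<forall>v. Ck k (\<lambda>x. frechet_derivative f (at x) v)))"

definition smooth :: "('a::real_normed_vector \<Rightarrow> 'b::real_normed_vector) \<Rightarrow> bool" where
  "smooth f \<longleftrightarrow> (\<forall>k. Ck k f)"

definition equiv_diffeomorphic :: "(rr^'n::finite)^'n \<Rightarrow> (rr^'n)^'n \<Rightarrow> bool" where
  "equiv_diffeomorphic A A' \<longleftrightarrow>
     (\<exists>f h. smooth f \<and> smooth h \<and> (\<forall>x. h (f x) = x) \<and> (\<forall>y. f (h y) = y) \<and> equivariant A A' f)"

definition equiv_homeomorphic :: "(rr^'n::finite)^'n \<Rightarrow> (rr^'n)^'n \<Rightarrow> bool" where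
  "equiv_homeomorphic A A' \<longleftrightarrow>
     (\<exists>f h. homeomorphism UNIV UNIV f h \<and> equivariant A A' f)"

end

theory Submission
  imports Defs
begin

lemma cpow_exp: "cpow (exp (Complex a t)) mu = exp (fst mu * of_real a + \<i> * (of_int (snd mu) * of_real t))"
proof -
  have e: "exp (Complex a t) = of_real (exp a) * cis t"
    by (simp add: exp_eq_polar)
  have n: "norm (exp (Complex a t)) = exp a" by (simp add: norm_exp_eq_Re)
  have s: "sgn (exp (Complex a t)) = cis t"
    unfolding e by (simp add: sgn_mult sgn_of_real)
  have "cpow (exp (Complex a t)) mu = exp (fst mu * of_real a) * cis (of_int (snd mu) * t)"
    unfolding cpow_def n s by (simp add: cis_power_int)
  also have "\<dots> = exp (fst mu * of_real a + \<i> * (of_int (snd mu) * of_real t))"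
    by (simp add: cis_conv_exp exp_add)
  finally show ?thesis .
qed

lemma nonzero_exp_form: "g \<noteq> 0 \<Longrightarrow> g = exp (Complex (ln (norm g)) (Arg g))"
proof -
  assume "g \<noteq> 0"
  then have "exp (Complex (ln (norm g)) (Arg g)) = of_real (norm g) * cis (Arg g)"
    by (simp add: exp_eq_polar)
  also have "\<dots> = g" using rcis_cmod_Arg[of g] by (simp add: rcis_def)
  finally show ?thesis by simp
qed

definition rsum :: "('j \<Rightarrow> rr) \<Rightarrow> 'j set \<Rightarrow> rr" where
  "rsum F A = ((\<Sum>j\<in>A. fst (F j)), (\<Sum>j\<in>A. snd (F j)))"

lemma rinner_rsum: "rinner a b = rsum (\<lambda>k. rmult (a$k) (b$k)) UNIV"
  by (simp add: rinner_def rsum_def)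

lemma rmult_assoc: "rmult (rmult x y) z = rmult x (rmult y z)"
  by (simp add: rmult_def complex_eq_iff algebra_simps)

lemma rmult_rone[simp]: "rmult x rone = x" "rmult rone x = x"
  by (simp_all add: rmult_def rone_def complex_eq_iff)

lemma rmult_rzero[simp]: "rmult x rzero = rzero" "rmult rzero x = rzero"
  by (simp_all add: rmult_def rzero_def complex_eq_iff)

lemma fst_rmult_lin: "fst (rmult x m) = fst x * of_real (Re (fst m)) + of_int (snd x) * (\<i> * of_real (Im (fst m)))"
  by (simp add: rmult_def complex_eq_iff)

lemma snd_rmult: "snd (rmult x m) = snd x * snd m"
  by (simp add: rmult_def)

lemma rmult_rsum_right: "rmult (rsum F A) m = rsum (\<lambda>j. rmult (F j) m) A"
proof -
  have "fst (rmult (rsum F A) m) = fst (rsum (\<lambda>j. rmult (F j) m) A)"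
    unfolding fst_rmult_lin by (simp add: rsum_def fst_rmult_lin sum_distrib_right sum.distrib)
  moreover have "snd (rmult (rsum F A) m) = snd (rsum (\<lambda>j. rmult (F j) m) A)"
    by (simp add: rsum_def snd_rmult sum_distrib_right)
  ultimately show ?thesis by (simp add: prod_eq_iff)
qed

lemma rinner_rvmult: "rinner a (rvmult b m) = rmult (rinner a b) m"
  unfolding rinner_rsum rmult_rsum_right rvmult_def by (simp add: rmult_assoc)

lemma rsum_single:
  assumes "finite A" "j0 \<in> A" "\<And>j. j \<in> A \<Longrightarrow> j \<noteq> j0 \<Longrightarrow> F j = rzero"
  shows "rsum F A = F j0"
proof -
  have "(\<Sum>j\<in>A. fst (F j)) = fst (F j0)"
    using assms by (subst sum.remove[of A j0]) (auto simp: rzero_def intro!: sum.neutral)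
  moreover have "(\<Sum>j\<in>A. snd (F j)) = snd (F j0)"
    using assms by (subst sum.remove[of A j0]) (auto simp: rzero_def intro!: sum.neutral)
  ultimately show ?thesis by (simp add: rsum_def)
qed

lemma cpow_nz: "g \<noteq> 0 \<Longrightarrow> cpow g m \<noteq> 0"
  by (simp add: cpow_def sgn_eq_0_iff)

lemma cpow_mult: "g \<noteq> 0 \<Longrightarrow> h \<noteq> 0 \<Longrightarrow> cpow (g * h) m = cpow g m * cpow h m"
  by (simp add: cpow_def norm_mult ln_mult sgn_mult power_int_mult_distrib distrib_left exp_add)

lemma cpow_radd: "g \<noteq> 0 \<Longrightarrow> cpow g (radd m1 m2) = cpow g m1 * cpow g m2"
proof -
  assume g: "g \<noteq> 0"
  then have "sgn g \<noteq> 0" by (simp add: sgn_eq_0_iff)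
  then show ?thesis by (simp add: cpow_def radd_def power_int_add distrib_right exp_add)
qed

lemma cpow_00: "cpow g (0, 0) = 1"
  by (simp add: cpow_def)

lemma cpow_rzero[simp]: "cpow g rzero = 1"
  by (simp add: cpow_def rzero_def)

lemma cpow_rone: "g \<noteq> 0 \<Longrightarrow> cpow g rone = g"
proof -
  assume g: "g \<noteq> 0"
  have "cpow g rone = of_real (norm g) * sgn g"
  proof -
    have "exp (complex_of_real (ln (cmod g))) = of_real (norm g)"
      using g by (metis exp_of_real exp_ln zero_less_norm_iff)
    then show ?thesis by (simp add: cpow_def rone_def)
  qed
  also have "\<dots> = g" by (simp add: complex_sgn_def scaleR_conv_of_real g)
  finally show ?thesis .
qed

lemma cpow_rsum: assumes "g \<noteq> 0" "finite A" shows "cpow g (rsum F A) = (\<Prod>j\<in>A. cpow g (F j))"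
  using assms(2)
proof (induction A rule: finite_induct)
  case empty then show ?case by (simp add: rsum_def cpow_00)
next
  case (insert x A)
  have "rsum F (insert x A) = radd (F x) (rsum F A)"
    using insert by (simp add: rsum_def radd_def)
  then show ?case using insert assms(1) by (simp add: cpow_radd)
qed

lemma cpow_one_base[simp]: "cpow 1 m = 1"
  by (simp add: cpow_def)

lemma cpow_prod: "finite A \<Longrightarrow> (\<And>j. j \<in> A \<Longrightarrow> F j \<noteq> 0) \<Longrightarrow> cpow (\<Prod>j\<in>A. F j) m = (\<Prod>j\<in>A. cpow (F j) m)"
proof (induction A rule: finite_induct)
  case empty then show ?case by simp
next
  case (insert x A)
  then show ?case by (simp add: cpow_mult)
qed

lemma cpow_cpow: "g \<noteq> 0 \<Longrightarrow> cpow (cpow g m1) m2 = cpow g (rmult m2 m1)"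
proof -
  assume g: "g \<noteq> 0"
  define a where "a = ln (norm g)"
  define t where "t = Arg g"
  have ge: "g = exp (Complex a t)" using nonzero_exp_form[OF g] by (simp add: a_def t_def)
  define w where "w = fst m1 * of_real a + \<i> * (of_int (snd m1) * of_real t)"
  have c1: "cpow g m1 = exp (Complex (Re w) (Im w))" unfolding complex_surj unfolding ge cpow_exp w_def ..
  have "cpow (cpow g m1) m2 = exp (fst m2 * of_real (Re w) + \<i> * (of_int (snd m2) * of_real (Im w)))"
    unfolding c1 cpow_exp by simp
  also have "\<dots> = exp (fst (rmult m2 m1) * of_real a + \<i> * (of_int (snd (rmult m2 m1)) * of_real t))"
    by (rule arg_cong[where f=exp]) (simp add: w_def rmult_def complex_eq_iff algebra_simps)
  also have "\<dots> = cpow g (rmult m2 m1)" unfolding ge cpow_exp ..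
  finally show ?thesis .
qed

lemma exp_lin_one:
  fixes z :: complex
  assumes "\<And>s::real. exp (z * of_real s) = 1"
  shows "z = 0"
proof -
  have r: "Re z = 0" using assms[of 1] by (simp add: exp_eq_1)
  show ?thesis
  proof (rule ccontr)
    assume "z \<noteq> 0"
    then have i: "Im z \<noteq> 0" using r by (simp add: complex_eq_iff)
    have "exp (z * of_real (pi / Im z)) = 1" by (rule assms)
    then obtain n :: int where "Im (z * of_real (pi / Im z)) = of_int (2 * n) * pi"
      by (auto simp: exp_eq_1)
    then have "pi = of_int (2 * n) * pi" using i by simp
    then have "(1::real) = of_int (2 * n)" by simp
    then have "(1::int) = 2 * n" by (metis of_int_eq_1_iff)
    then show False by presburger
  qed
qed

lemma cpow_inj:
  assumes "\<And>t. t \<noteq> 0 \<Longrightarrow> cpow t m = cpow t m'"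
  shows "m = m'"
proof -
  have "exp ((fst m - fst m') * of_real s) = 1" for s
  proof -
    have "cpow (exp (Complex s 0)) m = cpow (exp (Complex s 0)) m'" by (rule assms) simp
    then have "exp (fst m * of_real s) = exp (fst m' * of_real s)" by (simp add: cpow_exp)
    then show ?thesis by (simp add: left_diff_distrib exp_diff)
  qed
  then have f: "fst m = fst m'" using exp_lin_one[of "fst m - fst m'"] by simp
  have "exp ((\<i> * (of_int (snd m) - of_int (snd m'))) * of_real s) = 1" for s
  proof -
    have "cpow (exp (Complex 0 s)) m = cpow (exp (Complex 0 s)) m'" by (rule assms) simp
    then have "exp (\<i> * (of_int (snd m) * of_real s)) = exp (\<i> * (of_int (snd m') * of_real s))"
      by (simp add: cpow_exp)
    then show ?thesis by (simp add: algebra_simps exp_diff)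
  qed
  then have "\<i> * (of_int (snd m) - of_int (snd m')) = (0::complex)"
    using exp_lin_one by blast
  then have "snd m = snd m'" by simp
  with f show ?thesis by (simp add: prod_eq_iff)
qed

definition lam :: "rr^'n::finite \<Rightarrow> complex \<Rightarrow> complex^'n" where
  "lam b t = (\<chi> k. cpow t (b$k))"

lemma lam_torus: "t \<noteq> 0 \<Longrightarrow> lam b t \<in> torus"
  by (simp add: lam_def torus_def cpow_nz)

lemma chr_nz: "g \<in> torus \<Longrightarrow> chr a g \<noteq> 0"
  by (simp add: chr_def torus_def cpow_nz)

lemma chr_lam: "t \<noteq> 0 \<Longrightarrow> chr a (lam b t) = cpow t (rinner a b)"
  by (simp add: chr_def lam_def cpow_cpow rinner_rsum cpow_rsum)

lemma chr_mult: "g \<in> torus \<Longrightarrow> h \<in> torus \<Longrightarrow> chr a (\<chi> k. g$k * h$k) = chr a g * chr a h"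
  by (simp add: chr_def torus_def cpow_mult prod.distrib)

lemma chr_prodvec:
  fixes F :: "'j \<Rightarrow> complex^'n::finite"
  assumes "finite J" "\<And>j. j \<in> J \<Longrightarrow> F j \<in> torus"
  shows "chr a (\<chi> k. \<Prod>j\<in>J. F j $ k) = (\<Prod>j\<in>J. chr a (F j))"
proof -
  have "chr a (\<chi> k. \<Prod>j\<in>J. F j $ k) = (\<Prod>k\<in>UNIV. \<Prod>j\<in>J. cpow (F j $ k) (a$k))"
    unfolding chr_def using assms by (simp add: cpow_prod torus_def)
  also have "\<dots> = (\<Prod>j\<in>J. chr a (F j))"
    unfolding chr_def by (rule prod.swap)
  finally show ?thesis .
qed

lemma act_id: "(\<And>i. chr (A$i) g = 1) \<Longrightarrow> act A g z = z"
  by (simp add: act_def vec_eq_iff)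

lemma faithful_eq:
  assumes "faithful A" "g \<in> torus" "h \<in> torus" "\<And>i. chr (A$i) g = chr (A$i) h"
  shows "g = h"
proof -
  define q where "q = (\<chi> k. g$k / h$k)"
  have q: "q \<in> torus" using assms(2,3) by (simp add: q_def torus_def)
  have qh: "(\<chi> k. q$k * h$k) = g" using assms(3) by (simp add: q_def torus_def vec_eq_iff)
  have "chr (A$i) q = 1" for i
  proof -
    have "chr (A$i) g = chr (A$i) q * chr (A$i) h"
      using chr_mult[OF q assms(3), of "A$i"] qh by simp
    then show ?thesis using assms(4)[of i] chr_nz[OF assms(3), of "A$i"] by simp
  qed
  then have "q = 1" using assms(1) q act_id unfolding faithful_def by blast
  then show ?thesis using assms(3) by (simp add: q_def vec_eq_iff torus_def)
qed

lemma cpow_delta: "t \<noteq> 0 \<Longrightarrow> cpow t (if b then rone else rzero) = (if b then t else 1)"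
  by (simp add: cpow_rone)

lemma decomp:
  assumes fa: "faithful A" and du: "dual A B" and g: "g \<in> torus"
  shows "g = (\<chi> k. \<Prod>j\<in>UNIV. lam (B$j) (chr (A$j) g) $ k)"
proof -
  define g' where "g' = (\<chi> k. \<Prod>j\<in>UNIV. lam (B$j) (chr (A$j) g) $ k)"
  have lt: "lam (B$j) (chr (A$j) g) \<in> torus" for j using chr_nz[OF g] lam_torus by blast
  have g't: "g' \<in> torus" using lt unfolding g'_def torus_def by auto
  have "chr (A$i) g' = chr (A$i) g" for i
  proof -
    have "chr (A$i) g' = (\<Prod>j\<in>UNIV. cpow (chr (A$j) g) (rinner (A$i) (B$j)))"
      unfolding g'_def using lt by (simp add: chr_prodvec chr_lam chr_nz[OF g])
    also have "\<dots> = (\<Prod>j\<in>UNIV. (if i = j then chr (A$j) g else 1))"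
      using du chr_nz[OF g] by (simp add: dual_def cpow_delta)
    also have "\<dots> = chr (A$i) g" by simp
    finally show ?thesis .
  qed
  then have "g = g'" using faithful_eq[OF fa g g't] by metis
  then show ?thesis by (simp add: g'_def)
qed

lemma chr_decomp:
  assumes fa: "faithful A" and du: "dual A B" and g: "g \<in> torus"
  shows "chr c g = (\<Prod>j\<in>UNIV. cpow (chr (A$j) g) (rinner c (B$j)))"
proof -
  have lt: "lam (B$j) (chr (A$j) g) \<in> torus" for j using chr_nz[OF g] lam_torus by blast
  have "chr c g = chr c (\<chi> k. \<Prod>j\<in>UNIV. lam (B$j) (chr (A$j) g) $ k)"
    by (rule arg_cong[where f="chr c", OF decomp[OF fa du g]])
  also have "\<dots> = (\<Prod>j\<in>UNIV. cpow (chr (A$j) g) (rinner c (B$j)))"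
    using lt by (simp add: chr_prodvec chr_lam chr_nz[OF g])
  finally show ?thesis .
qed

lemma pairing_inj:
  assumes fa: "faithful A" and eq: "\<And>k. rinner (A$k) x = rinner (A$k) y"
  shows "x = y"
proof -
  have "cpow t (x$k) = cpow t (y$k)" if t: "t \<noteq> 0" for t k
  proof -
    have "chr (A$i) (lam x t) = chr (A$i) (lam y t)" for i
      using eq[of i] by (simp only: chr_lam[OF t])
    then have "lam x t = lam y t"
      by (rule faithful_eq[OF fa lam_torus[OF t] lam_torus[OF t]])
    then show ?thesis by (simp add: lam_def vec_eq_iff)
  qed
  then show ?thesis unfolding vec_eq_iff using cpow_inj by blast
qed

lemma chr_nontriv:
  assumes du: "dual A B"
  shows "chr (A$k) (lam (B$k) 2) = 2"
  using du by (simp add: chr_lam dual_def cpow_rone)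

lemma PQ:
  assumes fa: "faithful A" and du: "dual A B" and du': "dual A' B'"
  shows "rsum (\<lambda>j. rmult (rinner (A'$k) (B$j)) (rinner (A$j) (B'$l))) UNIV = (if k = l then rone else rzero)"
proof (rule cpow_inj)
  fix t :: complex assume t: "t \<noteq> 0"
  have "cpow t (rsum (\<lambda>j. rmult (rinner (A'$k) (B$j)) (rinner (A$j) (B'$l))) UNIV)
      = (\<Prod>j\<in>UNIV. cpow (cpow t (rinner (A$j) (B'$l))) (rinner (A'$k) (B$j)))"
    using t by (simp add: cpow_rsum cpow_cpow del: cpow_rzero)
  also have "\<dots> = (\<Prod>j\<in>UNIV. cpow (chr (A$j) (lam (B'$l) t)) (rinner (A'$k) (B$j)))"
    using t by (simp add: chr_lam)
  also have "\<dots> = chr (A'$k) (lam (B'$l) t)"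
    by (rule chr_decomp[OF fa du lam_torus[OF t], symmetric])
  also have "\<dots> = cpow t (if k = l then rone else rzero)"
    using t du' by (simp add: chr_lam dual_def)
  finally show "cpow t (rsum (\<lambda>j. rmult (rinner (A'$k) (B$j)) (rinner (A$j) (B'$l))) UNIV) = cpow t (if k = l then rone else rzero)" .
qed

definition pw :: "complex \<Rightarrow> rr \<Rightarrow> complex" where
  "pw w m = (if w = 0 then 0 else cpow w m)"

lemma pw_mult: "g \<noteq> 0 \<Longrightarrow> pw (g * w) m = cpow g m * pw w m"
  by (simp add: pw_def cpow_mult)

lemma pw_pw: "pw (pw w a) b = pw w (rmult b a)"
  by (simp add: pw_def cpow_nz cpow_cpow)

lemma pw_rone[simp]: "pw w rone = w"
  by (simp add: pw_def cpow_rone)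

lemma construct:
  assumes fa: "faithful \<alpha>" and du: "dual \<alpha> \<beta>" and du': "dual \<alpha>' \<beta>'"
    and perm: "\<sigma> permutes (UNIV::'n::finite set)"
    and inv1: "\<And>i. rmult (\<mu> i) (\<nu> i) = rone" and inv2: "\<And>i. rmult (\<nu> i) (\<mu> i) = rone"
    and beq: "\<And>i. \<beta>'$(\<sigma> i) = rvmult (\<beta>$i) (\<mu> i)"
  shows "(\<forall>z. (\<chi> i. pw ((\<chi> k. pw (z $ inv \<sigma> k) (\<nu> (inv \<sigma> k))) $ \<sigma> i) (\<mu> i)) = z)
       \<and> (\<forall>w. (\<chi> k. pw ((\<chi> i. pw (w $ \<sigma> i) (\<mu> i)) $ inv \<sigma> k) (\<nu> (inv \<sigma> k))) = w)
       \<and> equivariant \<alpha> \<alpha>' (\<lambda>z. \<chi> k. pw (z $ inv \<sigma> k) (\<nu> (inv \<sigma> k)))"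
    (is "?A \<and> ?B \<and> ?C")
proof -
  have sinj: "\<sigma> i = \<sigma> j \<longleftrightarrow> i = j" for i j using permutes_inj[OF perm] by (auto dest: injD)
  have si1: "\<sigma> (inv \<sigma> k) = k" for k using permutes_inverses(1)[OF perm] .
  have si2: "inv \<sigma> (\<sigma> k) = k" for k using permutes_inverses(2)[OF perm] .
  have P: "rinner (\<alpha>'$k) (\<beta>$j) = (if k = \<sigma> j then \<nu> j else rzero)" for k j
  proof -
    have "rmult (rinner (\<alpha>'$k) (\<beta>$j)) (\<mu> j) = (if k = \<sigma> j then rone else rzero)"
      using du' unfolding rinner_rvmult[symmetric] beq[symmetric] dual_def by simp
    then have "rmult (rmult (rinner (\<alpha>'$k) (\<beta>$j)) (\<mu> j)) (\<nu> j) = (if k = \<sigma> j then \<nu> j else rzero)"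
      by simp
    then show ?thesis by (simp add: rmult_assoc inv1)
  qed
  have chrs: "chr (\<alpha>'$(\<sigma> i)) g = cpow (chr (\<alpha>$i) g) (\<nu> i)" if g: "g \<in> torus" for g i
  proof -
    have "chr (\<alpha>'$(\<sigma> i)) g = (\<Prod>j\<in>UNIV. cpow (chr (\<alpha>$j) g) (rinner (\<alpha>'$(\<sigma> i)) (\<beta>$j)))"
      by (rule chr_decomp[OF fa du g])
    also have "\<dots> = (\<Prod>j\<in>UNIV. (if j = i then cpow (chr (\<alpha>$j) g) (\<nu> j) else 1))"
      by (rule prod.cong) (auto simp: P sinj)
    also have "\<dots> = cpow (chr (\<alpha>$i) g) (\<nu> i)" by simp
    finally show ?thesis .
  qed
  have A: ?A by (simp add: vec_eq_iff si2 pw_pw inv1)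
  have B: ?B by (simp add: vec_eq_iff si1 pw_pw inv2)
  have C: ?C unfolding equivariant_def
  proof (intro ballI allI)
    fix g z :: "complex^'n" assume g: "g \<in> torus"
    show "(\<chi> k. pw (act \<alpha> g z $ inv \<sigma> k) (\<nu> (inv \<sigma> k))) = act \<alpha>' g (\<chi> k. pw (z $ inv \<sigma> k) (\<nu> (inv \<sigma> k)))"
    proof (subst vec_eq_iff, intro allI)
      fix k
      have "chr (\<alpha>'$k) g = cpow (chr (\<alpha>$(inv \<sigma> k)) g) (\<nu> (inv \<sigma> k))"
        using chrs[OF g, of "inv \<sigma> k"] by (simp add: si1)
      then show "(\<chi> k. pw (act \<alpha> g z $ inv \<sigma> k) (\<nu> (inv \<sigma> k))) $ k = act \<alpha>' g (\<chi> k. pw (z $ inv \<sigma> k) (\<nu> (inv \<sigma> k))) $ k"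
        by (simp add: act_def pw_mult chr_nz[OF g])
    qed
  qed
  show ?thesis using A B C by blast
qed

lemma pw_mu0: "pw w mu0 = cnj w"
proof (cases "w = 0")
  case True then show ?thesis by (simp add: pw_def)
next
  case False
  have e: "exp (complex_of_real (ln (cmod w))) = of_real (norm w)"
    using False by (metis exp_of_real exp_ln zero_less_norm_iff)
  have aux: "complex_of_real (cmod w) * complex_of_real (cmod w) = w * cnj w"
    by (metis complex_norm_square of_real_mult power2_eq_square)
  have "pw w mu0 = of_real (norm w) * inverse (sgn w)"
    using False by (simp add: pw_def cpow_def mu0_def e power_int_minus)
  also have "\<dots> = cnj w"
    using False aux by (simp add: complex_sgn_def scaleR_conv_of_real field_simps)
  finally show ?thesis .
qed

lemma norm_cpow: "w \<noteq> 0 \<Longrightarrow> norm (cpow w m) = norm w powr Re (fst m)"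
  by (simp add: cpow_def norm_mult norm_power_int norm_sgn powr_def)

lemma pw_cont:
  assumes m: "Re (fst m) > 0"
  shows "continuous_on UNIV (\<lambda>w. pw w m)"
proof -
  have "isCont (\<lambda>w. pw w m) w" for w
  proof (cases "w = 0")
    case True
    have "((\<lambda>w. norm w powr Re (fst m)) \<longlongrightarrow> 0) (at (0::complex))"
      by (rule tendsto_zero_powrI) (auto intro!: tendsto_eq_intros m)
    then have "((\<lambda>w. norm (pw w m)) \<longlongrightarrow> 0) (at (0::complex))"
      by (rule Lim_transform_eventually) (auto simp: pw_def norm_cpow eventually_at_filter)
    then have "((\<lambda>w. pw w m) \<longlongrightarrow> 0) (at (0::complex))"
      by (rule tendsto_norm_zero_cancel)
    then show ?thesis using True by (simp add: isCont_def pw_def)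
  next
    case False
    have ev: "eventually (\<lambda>x. pw x m = exp (fst m * of_real (ln (norm x))) * sgn x powi (snd m)) (nhds w)"
      using t1_space_nhds[OF False] by eventually_elim (simp add: pw_def cpow_def)
    have "isCont (\<lambda>x. exp (fst m * of_real (ln (norm x))) * sgn x powi (snd m)) w"
      using False
      by (intro continuous_intros continuous_power_int isCont_sgn)
         (auto simp: sgn_eq_0_iff)
    then show ?thesis using isCont_cong[OF ev] by simp
  qed
  then show ?thesis by (simp add: continuous_on_eq_continuous_at)
qed

lemma Ck_const: "Ck k (\<lambda>x::'a::real_normed_vector. c::'b::real_normed_vector)"
proof (induction k arbitrary: c)
  case 0 then show ?case by simp
next
  case (Suc k)
  have "frechet_derivative (\<lambda>x::'a. c) (at x) = (\<lambda>h. 0)" for x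
    by (rule frechet_derivative_at[symmetric]) simp
  then show ?case using Suc by simp
qed

lemma smooth_linear: "bounded_linear f \<Longrightarrow> smooth f"
proof -
  assume bl: "bounded_linear f"
  have fd: "frechet_derivative f (at x) = f" for x
    by (rule frechet_derivative_at[symmetric]) (rule bounded_linear_imp_has_derivative[OF bl])
  have "Ck k f" for k
  proof (cases k)
    case 0 then show ?thesis using bl by (simp add: linear_continuous_on)
  next
    case (Suc k')
    then show ?thesis using bl by (simp add: fd Ck_const bounded_linear_imp_differentiable)
  qed
  then show ?thesis by (simp add: smooth_def)
qed

definition rinv :: "rr \<Rightarrow> rr" where
  "rinv x = (Complex (1 / Re (fst x)) (- Im (fst x) / (Re (fst x) * of_int (snd x))), snd x)"

lemma rinv:
  assumes "Re (fst x) \<noteq> 0" "snd x = 1 \<or> snd x = -1"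
  shows "rmult x (rinv x) = rone" "rmult (rinv x) x = rone"
  using assms by (auto simp: rmult_def rinv_def rone_def complex_eq_iff field_simps)

lemma Re_rinv: "Re (fst (rinv x)) = 1 / Re (fst x)"
  by (simp add: rinv_def)

lemma rvmult_rone: "rvmult b rone = b"
  by (simp add: rvmult_def vec_eq_iff)

lemma mu0_mu0: "rmult mu0 mu0 = rone"
  by (simp add: rmult_def mu0_def rone_def complex_eq_iff)

lemma cont_comp_pw:
  assumes "Re (fst m) > 0"
  shows "continuous_on UNIV (\<lambda>z::complex^'n. pw (z $ j) m)"
  by (rule continuous_on_compose2[OF pw_cont[OF assms]]) (auto intro: continuous_on_component continuous_on_id)

lemma homeo_if:
  assumes fa: "faithful \<alpha>" and du: "dual \<alpha> \<beta>" and du': "dual \<alpha>' \<beta>'"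
    and perm: "\<sigma> permutes (UNIV::'n::finite set)"
    and mu: "\<And>i. \<mu> i \<in> Sset \<and> \<beta>'$(\<sigma> i) = rvmult (\<beta>$i) (\<mu> i)"
  shows "equiv_homeomorphic \<alpha> \<alpha>'"
proof -
  define \<nu> where "\<nu> i = rinv (\<mu> i)" for i
  have mS: "Re (fst (\<mu> i)) > 0" "snd (\<mu> i) = 1 \<or> snd (\<mu> i) = -1" for i
    using mu[of i] by (auto simp: Sset_def)
  have i1: "rmult (\<mu> i) (\<nu> i) = rone" and i2: "rmult (\<nu> i) (\<mu> i) = rone" for i
    using rinv[of "\<mu> i"] mS[of i] by (auto simp: \<nu>_def)
  have nS: "Re (fst (\<nu> i)) > 0" for i using mS(1)[of i] by (simp add: \<nu>_def Re_rinv)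
  define f where "f = (\<lambda>z::complex^'n. \<chi> k. pw (z $ inv \<sigma> k) (\<nu> (inv \<sigma> k)))"
  define h where "h = (\<lambda>w::complex^'n. \<chi> i. pw (w $ \<sigma> i) (\<mu> i))"
  have c: "(\<forall>z. h (f z) = z) \<and> (\<forall>w. f (h w) = w) \<and> equivariant \<alpha> \<alpha>' f"
  proof -
    have beq: "\<beta>'$(\<sigma> i) = rvmult (\<beta>$i) (\<mu> i)" for i using mu[of i] by blast
    have i1': "\<And>i. rmult (\<mu> i) (\<nu> i) = rone" by (rule i1)
    have i2': "\<And>i. rmult (\<nu> i) (\<mu> i) = rone" by (rule i2)
    show ?thesis unfolding f_def h_def by (rule construct[OF fa du du' perm i1' i2' beq])
  qed
  have cf: "continuous_on UNIV f" unfolding f_def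
    by (intro continuous_on_vec_lambda cont_comp_pw nS)
  have ch: "continuous_on UNIV h" unfolding h_def
    by (intro continuous_on_vec_lambda cont_comp_pw mS)
  have "homeomorphism UNIV UNIV f h"
    unfolding homeomorphism_def using c cf ch by (metis UNIV_I image_eqI subsetI subset_antisym)
  then show ?thesis using c unfolding equiv_homeomorphic_def by blast
qed

lemma diffeo_if:
  assumes fa: "faithful \<alpha>" and du: "dual \<alpha> \<beta>" and du': "dual \<alpha>' \<beta>'"
    and perm: "\<sigma> permutes (UNIV::'n::finite set)"
    and b: "\<And>i. \<beta>'$(\<sigma> i) = \<beta>$i \<or> \<beta>'$(\<sigma> i) = rvmult (\<beta>$i) mu0"
  shows "equiv_diffeomorphic \<alpha> \<alpha>'"
proof -
  define \<mu> where "\<mu> i = (if \<beta>'$(\<sigma> i) = \<beta>$i then rone else mu0)" for i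
  have m01: "\<mu> i = rone \<or> \<mu> i = mu0" for i by (simp add: \<mu>_def)
  have i1: "rmult (\<mu> i) (\<mu> i) = rone" for i using m01[of i] mu0_mu0 by auto
  have beq: "\<beta>'$(\<sigma> i) = rvmult (\<beta>$i) (\<mu> i)" for i
    using b[of i] by (auto simp: \<mu>_def rvmult_rone)
  define f where "f = (\<lambda>z::complex^'n. \<chi> k. pw (z $ inv \<sigma> k) (\<mu> (inv \<sigma> k)))"
  define h where "h = (\<lambda>w::complex^'n. \<chi> i. pw (w $ \<sigma> i) (\<mu> i))"
  have c: "(\<forall>z. h (f z) = z) \<and> (\<forall>w. f (h w) = w) \<and> equivariant \<alpha> \<alpha>' f"
    unfolding f_def h_def using construct[OF fa du du' perm i1 i1 beq] by blast
  have pwl: "pw (x + y) (\<mu> i) = pw x (\<mu> i) + pw y (\<mu> i)" "pw (r *\<^sub>R x) (\<mu> i) = r *\<^sub>R pw x (\<mu> i)" for x y r i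
    using m01[of i] by (auto simp: pw_mu0)
  have lf: "linear f" unfolding f_def
    by (rule linearI) (simp_all add: vec_eq_iff pwl)
  have lh: "linear h" unfolding h_def
    by (rule linearI) (simp_all add: vec_eq_iff pwl)
  have "smooth f" "smooth h"
    using lf lh by (simp_all add: smooth_linear linear_conv_bounded_linear[symmetric])
  then show ?thesis using c unfolding equiv_diffeomorphic_def by blast
qed

lemma rcomm_aux:
  fixes bx by' cx cy vx vy :: real
  assumes a: "bx * by' = 1" and b: "cx * by' + vx * cy = 0" and e: "vx = vy" and v: "vx * vy = 1"
  shows "cy * bx + vy * cx = 0"
proof -
  have vv: "vx * vx = 1" using e v by simp
  have b': "vx * cy = - (cx * by')" using b by linarith
  have "cy = (vx * vx) * cy" using vv by simp
  also have "\<dots> = vx * (vx * cy)" by (simp only: mult.assoc)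
  also have "\<dots> = - (vx * cx * by')" using b' by simp
  finally have "cy * bx = - (vx * cx) * (bx * by')" by (simp add: algebra_simps)
  then have "cy * bx = - (vx * cx)" using a by simp
  then show ?thesis using e by simp
qed

lemma rmult_comm_one:
  assumes "rmult x y = rone"
  shows "rmult y x = rone"
proof -
  have a: "Re (fst x) * Re (fst y) = 1" and b: "Im (fst x) * Re (fst y) + of_int (snd x) * Im (fst y) = 0"
    and c: "snd x * snd y = 1"
    using assms by (auto simp: rmult_def rone_def complex_eq_iff)
  have e: "snd x = snd y" using c zmult_eq_1_iff[of "snd x" "snd y"] by auto
  have v: "real_of_int (snd x) * real_of_int (snd y) = 1" using c by (metis of_int_1 of_int_mult)
  have "Im (fst y) * Re (fst x) + of_int (snd y) * Im (fst x) = 0"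
    by (rule rcomm_aux[OF a b _ v]) (simp add: e)
  then show ?thesis using a c by (simp add: rmult_def rone_def complex_eq_iff mult.commute)
qed

lemma act_nth[simp]: "act A g z $ k = chr (A$k) g * z$k"
  by (simp add: act_def)

lemma axis_zero[simp]: "axis j (0::complex) = 0"
  by (simp add: axis_def vec_eq_iff)

lemma forward:
  fixes \<alpha> \<alpha>' \<beta> \<beta>' :: "(rr^'n::finite)^'n" and f h :: "complex^'n \<Rightarrow> complex^'n"
  assumes fa: "faithful \<alpha>" and fa': "faithful \<alpha>'" and du: "dual \<alpha> \<beta>" and du': "dual \<alpha>' \<beta>'"
    and hf: "\<And>x. h (f x) = x" and eq: "equivariant \<alpha> \<alpha>' f"
  shows "\<exists>\<sigma> \<nu> \<mu> c. \<sigma> permutes UNIV \<and> (\<forall>j. \<beta>'$(\<sigma> j) = rvmult (\<beta>$j) (\<mu> j))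
           \<and> (\<forall>j. rmult (\<nu> j) (\<mu> j) = rone) \<and> (\<forall>j. c j \<noteq> 0)
           \<and> (\<forall>j s. f (axis j s) = axis (\<sigma> j) (pw s (\<nu> j) * c j))"
proof -
  define P where "P k j = rinner (\<alpha>'$k) (\<beta>$j)" for k j
  define Q where "Q j l = rinner (\<alpha>$j) (\<beta>'$l)" for j l
  have eqv: "f (act \<alpha> g z) = act \<alpha>' g (f z)" if "g \<in> torus" for g z
    using eq that unfolding equivariant_def by blast
  have f0: "f 0 = 0"
  proof -
    have "(f 0)$k = 0" for k
    proof -
      let ?g = "lam (\<beta>'$k) 2"
      have gt: "?g \<in> torus" by (rule lam_torus) simp
      have "act \<alpha> ?g 0 = 0" by (simp add: vec_eq_iff)
      then have "act \<alpha>' ?g (f 0) = f 0" using eqv[OF gt, of 0] by simp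
      then have "chr (\<alpha>'$k) ?g * (f 0)$k = (f 0)$k" by (metis act_nth)
      then show ?thesis using chr_nontriv[OF du', of k] by simp
    qed
    then show ?thesis by (simp add: vec_eq_iff)
  qed
  have finj: "f x = f y \<Longrightarrow> x = y" for x y using hf by metis
  have fnz: "f (axis j 1) \<noteq> 0" for j
  proof
    assume "f (axis j 1) = 0"
    then have "axis j (1::complex) = 0" using finj f0 by metis
    then show False by simp
  qed
  have rowtriv: "P k i = rzero" if "i \<noteq> j" "s \<noteq> 0" "f (axis j s) $ k \<noteq> 0" for i j k s
  proof (rule cpow_inj)
    fix t :: complex assume t: "t \<noteq> 0"
    let ?g = "lam (\<beta>$i) t"
    have gt: "?g \<in> torus" using lam_torus[OF t] .
    have "act \<alpha> ?g (axis j s) = axis j s"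
      using du that(1) t by (auto simp: vec_eq_iff axis_def chr_lam dual_def)
    then have "act \<alpha>' ?g (f (axis j s)) = f (axis j s)" using eqv[OF gt] by metis
    then have "chr (\<alpha>'$k) ?g * f (axis j s) $ k = f (axis j s) $ k" by (metis act_nth)
    then have "chr (\<alpha>'$k) ?g = 1" using that(3) by simp
    then show "cpow t (P k i) = cpow t rzero" using t by (simp add: P_def chr_lam)
  qed
  have rownz: "\<exists>j. P k j \<noteq> rzero" for k
  proof (rule ccontr)
    assume "\<not> (\<exists>j. P k j \<noteq> rzero)" then have z: "P k j = rzero" for j by blast
    have gt: "lam (\<beta>'$k) 2 \<in> torus" by (rule lam_torus) simp
    have "chr (\<alpha>'$k) (lam (\<beta>'$k) 2) = (\<Prod>j\<in>UNIV. cpow (chr (\<alpha>$j) (lam (\<beta>'$k) 2)) (P k j))"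
      unfolding P_def by (rule chr_decomp[OF fa du gt])
    also have "\<dots> = 1" by (simp add: z)
    finally show False using chr_nontriv[OF du', of k] by simp
  qed
  define rs where "rs k j \<longleftrightarrow> (\<forall>i. i \<noteq> j \<longrightarrow> P k i = rzero)" for k j
  have rs_nz: "rs k j \<Longrightarrow> P k j \<noteq> rzero" for k j using rownz[of k] unfolding rs_def by metis
  have PQs: "rs k j \<Longrightarrow> rmult (P k j) (Q j l) = (if k = l then rone else rzero)" for k j l
  proof -
    assume r: "rs k j"
    have "rsum (\<lambda>i. rmult (P k i) (Q i l)) UNIV = rmult (P k j) (Q j l)"
      by (rule rsum_single) (use r in \<open>auto simp: rs_def\<close>)
    then show ?thesis using PQ[OF fa du du', of k l] unfolding P_def Q_def by simp
  qed
  have rs_uniq: "k1 = k2" if r1: "rs k1 j" and r2: "rs k2 j" for k1 k2 j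
  proof (rule ccontr)
    assume ne: "k1 \<noteq> k2"
    have a: "rmult (P k1 j) (Q j k1) = rone" using PQs[OF r1, of k1] by simp
    have b: "rmult (P k2 j) (Q j k1) = rzero" using PQs[OF r2, of k1] ne by simp
    have "P k2 j = rmult (P k2 j) (rmult (Q j k1) (P k1 j))" using rmult_comm_one[OF a] by simp
    also have "\<dots> = rzero" by (simp add: rmult_assoc[symmetric] b)
    finally show False using rs_nz[OF r2] by simp
  qed
  have supp: "rs k j" if "s \<noteq> 0" "f (axis j s) $ k \<noteq> 0" for j k s
    unfolding rs_def using rowtriv that by blast
  have ex: "\<exists>k. rs k j" for j
  proof -
    obtain k where "f (axis j 1) $ k \<noteq> 0" using fnz[of j] by (auto simp: vec_eq_iff)
    then show ?thesis using supp[of 1] by auto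
  qed
  define \<sigma> where "\<sigma> j = (SOME k. rs k j)" for j
  have rss: "rs (\<sigma> j) j" for j unfolding \<sigma>_def using ex[of j] by (rule someI_ex)
  have sinj: "inj \<sigma>"
  proof (rule injI)
    fix j1 j2 assume e: "\<sigma> j1 = \<sigma> j2"
    show "j1 = j2"
    proof (rule ccontr)
      assume "j1 \<noteq> j2"
      then have "P (\<sigma> j2) j1 = rzero" using rss[of j2] by (simp add: rs_def)
      then show False using rs_nz[OF rss[of j1]] e by simp
    qed
  qed
  have ssurj: "surj \<sigma>" by (rule finite_UNIV_inj_surj[OF _ sinj]) simp
  have perm: "\<sigma> permutes UNIV"
    by (rule bij_imp_permutes) (use sinj ssurj in \<open>auto simp: bij_def\<close>)
  define \<nu> where "\<nu> j = P (\<sigma> j) j" for j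
  define \<mu> where "\<mu> j = Q j (\<sigma> j)" for j
  have nm: "rmult (\<nu> j) (\<mu> j) = rone" for j using PQs[OF rss[of j], of "\<sigma> j"] by (simp add: \<nu>_def \<mu>_def)
  have col: "P k j = rzero" if "k \<noteq> \<sigma> j" for k j
  proof -
    obtain j' where k: "k = \<sigma> j'" using ssurj by (metis surjD)
    then have "j' \<noteq> j" using that by auto
    then show ?thesis using rss[of j'] k by (simp add: rs_def)
  qed
  have beq: "\<beta>'$(\<sigma> j) = rvmult (\<beta>$j) (\<mu> j)" for j
  proof (rule pairing_inj[OF fa'])
    fix k
    show "rinner (\<alpha>'$k) (\<beta>'$(\<sigma> j)) = rinner (\<alpha>'$k) (rvmult (\<beta>$j) (\<mu> j))"
    proof (cases "k = \<sigma> j")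
      case True then show ?thesis using du' nm[of j] by (simp add: dual_def rinner_rvmult \<nu>_def P_def)
    next
      case False then show ?thesis using du' col[of k j] by (simp add: dual_def rinner_rvmult P_def)
    qed
  qed
  define c where "c j = f (axis j 1) $ \<sigma> j" for j
  have fax: "f (axis j s) = axis (\<sigma> j) (f (axis j s) $ \<sigma> j)" if s0: "s \<noteq> 0" for j s
  proof (subst vec_eq_iff, intro allI)
    fix k
    show "f (axis j s) $ k = axis (\<sigma> j) (f (axis j s) $ \<sigma> j) $ k"
    proof (cases "k = \<sigma> j")
      case True then show ?thesis by simp
    next
      case False
      have "f (axis j s) $ k = 0"
      proof (rule ccontr)
        assume "f (axis j s) $ k \<noteq> 0"
        then have "rs k j" by (rule supp[OF s0])
        then have "k = \<sigma> j" by (rule rs_uniq[OF _ rss[of j]])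
        then show False using False by simp
      qed
      then show ?thesis using False by (simp add: axis_def)
    qed
  qed
  have phi: "f (axis j s) $ \<sigma> j = cpow s (\<nu> j) * c j" if s: "s \<noteq> 0" for j s
  proof -
    let ?g = "lam (\<beta>$j) s"
    have gt: "?g \<in> torus" using lam_torus[OF s] .
    have "act \<alpha> ?g (axis j 1) = axis j s"
      using du s by (auto simp: vec_eq_iff axis_def chr_lam dual_def cpow_rone)
    then have "f (axis j s) = act \<alpha>' ?g (f (axis j 1))" using eqv[OF gt] by metis
    then show ?thesis using s by (simp add: c_def chr_lam \<nu>_def P_def)
  qed
  have cnz: "c j \<noteq> 0" for j
    using fnz[of j] fax[of 1 j] unfolding c_def by (metis axis_eq_0_iff one_neq_zero)
  have main: "f (axis j s) = axis (\<sigma> j) (pw s (\<nu> j) * c j)" for j s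
  proof (cases "s = 0")
    case True then show ?thesis using f0 by (simp add: pw_def)
  next
    case False then show ?thesis using fax[OF False] phi[OF False] by (simp add: pw_def)
  qed
  show ?thesis using perm beq nm cnz main by blast
qed

lemma cont_axis: "continuous_on UNIV (\<lambda>r::real. axis j (complex_of_real r) :: complex^'n::finite)"
  unfolding axis_def
  apply (intro continuous_on_vec_lambda)
  subgoal for i by (cases "i = j") (auto intro: continuous_intros)
  done

lemma powr_ge1: "0 < r \<Longrightarrow> r \<le> 1 \<Longrightarrow> x \<le> 0 \<Longrightarrow> (1::real) \<le> r powr x"
proof -
  assume r: "0 < r" "r \<le> 1" and x: "x \<le> 0"
  have "ln r \<le> 0" using r by simp
  then have "0 \<le> x * ln r" using x by (simp add: mult_nonpos_nonpos)
  then show ?thesis using r by (simp add: powr_def)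
qed

lemma pos_re:
  fixes f :: "complex^'n::finite \<Rightarrow> complex^'n"
  assumes cf: "continuous_on UNIV f" and ax: "\<And>s. f (axis j s) = axis k (pw s \<nu> * c)" and c: "c \<noteq> 0"
  shows "Re (fst \<nu>) > 0"
proof (rule ccontr)
  assume neg: "\<not> Re (fst \<nu>) > 0"
  define F where "F r = f (axis j (complex_of_real r)) $ k" for r
  have Fe: "F r = pw (of_real r) \<nu> * c" for r by (simp add: F_def ax)
  have "continuous_on UNIV F" unfolding F_def
    by (intro continuous_on_component continuous_on_compose2[OF cf cont_axis]) auto
  then have "isCont F 0" by (simp add: continuous_on_eq_continuous_at)
  then have "F \<midarrow>0\<rightarrow> 0" by (simp add: isCont_def Fe pw_def)
  then obtain d where d: "d > 0" "\<And>x. x \<noteq> 0 \<and> norm (x - 0) < d \<longrightarrow> norm (F x - 0) < norm c"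
    unfolding LIM_eq using c by (meson zero_less_norm_iff)
  define r where "r = min (d/2) (1/2)"
  have r: "0 < r" "r < d" "r \<le> 1" using d by (auto simp: r_def)
  have "norm (F r) < norm c" using d(2)[of r] r by simp
  moreover have "norm (F r) = r powr Re (fst \<nu>) * norm c"
    using r by (simp add: Fe pw_def norm_mult norm_cpow)
  moreover have "1 \<le> r powr Re (fst \<nu>)" using powr_ge1[of r "Re (fst \<nu>)"] r neg by simp
  ultimately show False
    using mult_right_mono[of 1 "r powr Re (fst \<nu>)" "norm c"] by simp
qed

lemma bl_axis: "bounded_linear (\<lambda>x::complex. axis j x :: complex^'n::finite)"
proof -
  have "linear (\<lambda>x::complex. axis j x :: complex^'n)"
    by (rule linearI) (simp_all add: axis_def vec_eq_iff)
  then show ?thesis by (simp add: linear_conv_bounded_linear)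
qed

lemma cpow_ofreal_pos: "0 < r \<Longrightarrow> cpow (of_real r) m = exp (fst m * of_real (ln r))"
  by (simp add: cpow_def sgn_of_real)

lemma fst_one:
  fixes f h :: "complex^'n::finite \<Rightarrow> complex^'n"
  assumes df: "\<And>x. f differentiable (at x)" and dh: "\<And>x. h differentiable (at x)"
    and hf: "\<And>x. h (f x) = x"
    and ax: "\<And>s. f (axis j s) = axis k (pw s \<nu> * c)" and c: "c \<noteq> 0"
  shows "fst \<nu> = 1"
proof -
  define \<phi> where "\<phi> s = f (axis j s) $ k" for s
  define \<psi> where "\<psi> w = h (axis k w) $ j" for w
  have \<phi>e: "\<phi> s = pw s \<nu> * c" for s by (simp add: \<phi>_def ax)
  have \<phi>0: "\<phi> 0 = 0" by (simp add: \<phi>e pw_def)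
  have \<psi>\<phi>: "\<psi> (\<phi> s) = s" for s
  proof -
    have "axis k (\<phi> s) = f (axis j s)" by (simp add: \<phi>e ax)
    then show ?thesis by (simp add: \<psi>_def hf)
  qed
  obtain Df where Df: "(f has_derivative Df) (at (axis j 0))" using df unfolding differentiable_def by blast
  obtain Dh where Dh: "(h has_derivative Dh) (at (axis k 0))" using dh unfolding differentiable_def by blast
  have D\<phi>: "(\<phi> has_derivative (\<lambda>x. Df (axis j x) $ k)) (at 0)"
    unfolding \<phi>_def
    by (rule bounded_linear.has_derivative[OF bounded_linear_vec_nth])
       (rule has_derivative_compose[OF bounded_linear_imp_has_derivative[OF bl_axis] Df])
  have D\<psi>: "(\<psi> has_derivative (\<lambda>x. Dh (axis k x) $ j)) (at (\<phi> 0))"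
    unfolding \<psi>_def \<phi>0
    by (rule bounded_linear.has_derivative[OF bounded_linear_vec_nth])
       (rule has_derivative_compose[OF bounded_linear_imp_has_derivative[OF bl_axis] Dh])
  define D where "D x = Df (axis j x) $ k" for x
  define E where "E x = Dh (axis k x) $ j" for x
  have D\<phi>': "(\<phi> has_derivative D) (at 0)" using D\<phi> unfolding D_def .
  have lD: "linear D" using has_derivative_linear[OF D\<phi>'] .
  have lE: "linear E" using has_derivative_linear[OF D\<psi>] unfolding E_def .
  have "((\<lambda>s. \<psi> (\<phi> s)) has_derivative (\<lambda>x. E (D x))) (at 0)"
    using has_derivative_compose[OF D\<phi>' D\<psi>] unfolding E_def .
  moreover have "((\<lambda>s. \<psi> (\<phi> s)) has_derivative (\<lambda>x. x)) (at 0)" by (simp add: \<psi>\<phi>)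
  ultimately have ED: "(\<lambda>x. E (D x)) = (\<lambda>x. x)" by (rule has_derivative_unique)
  have D1: "D 1 \<noteq> 0"
  proof
    assume "D 1 = 0"
    then have "E (D 1) = 0" using linear_0[OF lE] by simp
    then show False using fun_cong[OF ED, of 1] by simp
  qed
  have K: "cpow (of_real r) \<nu> = of_real r" if r: "r > 0" for r
  proof -
    define K where "K = cpow (of_real r) \<nu>"
    have hom: "\<phi> (of_real r * x) = K * \<phi> x" for x
    proof (cases "x = 0")
      case True then show ?thesis by (simp add: \<phi>e pw_def)
    next
      case False
      then show ?thesis using r by (simp add: \<phi>e pw_def K_def cpow_mult)
    qed
    have "((\<lambda>x. \<phi> (of_real r * x)) has_derivative (\<lambda>x. D (of_real r * x))) (at 0)"
      using has_derivative_compose[OF has_derivative_mult_right[OF has_derivative_ident, of "of_real r" "at 0"], of \<phi> D]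
        D\<phi>' by simp
    moreover have "((\<lambda>x. \<phi> (of_real r * x)) has_derivative (\<lambda>x. K * D x)) (at 0)"
      unfolding hom by (rule has_derivative_mult_right[OF D\<phi>'])
    ultimately have "(\<lambda>x. D (of_real r * x)) = (\<lambda>x. K * D x)" by (rule has_derivative_unique)
    then have "D (of_real r * 1) = K * D 1" by metis
    moreover have "D (of_real r * 1) = of_real r * D 1"
      using linear_scale[OF lD, of r 1] by (simp add: scaleR_conv_of_real)
    ultimately have "(K - of_real r) * D 1 = 0" by (simp add: algebra_simps)
    then show ?thesis using D1 by (simp add: K_def)
  qed
  have "exp ((fst \<nu> - 1) * of_real s) = 1" for s
  proof -
    have "cpow (of_real (exp s)) \<nu> = of_real (exp s)" by (rule K) simp
    then have "exp (fst \<nu> * of_real s) = exp (of_real s)"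
      by (simp add: cpow_ofreal_pos exp_of_real)
    then show ?thesis by (simp add: left_diff_distrib exp_diff)
  qed
  then have "fst \<nu> - 1 = 0" by (rule exp_lin_one)
  then show ?thesis by simp
qed

theorem lemma2p7:
  fixes \<alpha> \<alpha>' \<beta> \<beta>' :: "(rr^'n::finite)^'n"
  assumes "faithful \<alpha>" and "faithful \<alpha>'"
    and "dual \<alpha> \<beta>" and "dual \<alpha>' \<beta>'"
  shows "(equiv_diffeomorphic \<alpha> \<alpha>' \<longleftrightarrow>
           (\<exists>\<sigma>. \<sigma> permutes (UNIV :: 'n set) \<and>
              (\<forall>i. \<beta>'$(\<sigma> i) = \<beta>$i \<or> \<beta>'$(\<sigma> i) = rvmult (\<beta>$i) mu0))) \<and>
         (equiv_homeomorphic \<alpha> \<alpha>' \<longleftrightarrow>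
           (\<exists>\<sigma> \<mu>. \<sigma> permutes (UNIV :: 'n set) \<and>
              (\<forall>i. \<mu> i \<in> Sset \<and> \<beta>'$(\<sigma> i) = rvmult (\<beta>$i) (\<mu> i))))"
proof (intro conjI iffI)
  note fa = assms(1) and fa' = assms(2) and du = assms(3) and du' = assms(4)
  show "equiv_diffeomorphic \<alpha> \<alpha>'" if "\<exists>\<sigma>. \<sigma> permutes (UNIV :: 'n set) \<and>
              (\<forall>i. \<beta>'$(\<sigma> i) = \<beta>$i \<or> \<beta>'$(\<sigma> i) = rvmult (\<beta>$i) mu0)"
    using that diffeo_if[OF fa du du'] by blast
  show "equiv_homeomorphic \<alpha> \<alpha>'" if "\<exists>\<sigma> \<mu>. \<sigma> permutes (UNIV :: 'n set) \<and>
              (\<forall>i. \<mu> i \<in> Sset \<and> \<beta>'$(\<sigma> i) = rvmult (\<beta>$i) (\<mu> i))"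
    using that homeo_if[OF fa du du'] by blast
  show "\<exists>\<sigma>. \<sigma> permutes (UNIV :: 'n set) \<and>
              (\<forall>i. \<beta>'$(\<sigma> i) = \<beta>$i \<or> \<beta>'$(\<sigma> i) = rvmult (\<beta>$i) mu0)"
    if ed: "equiv_diffeomorphic \<alpha> \<alpha>'"
  proof -
    obtain f h where sf: "smooth f" and sh: "smooth h" and hf: "\<And>x. h (f x) = x"
      and eq: "equivariant \<alpha> \<alpha>' f"
      using ed unfolding equiv_diffeomorphic_def by blast
    obtain \<sigma> \<nu> \<mu> c where perm: "\<sigma> permutes UNIV" and beq: "\<forall>j. \<beta>'$(\<sigma> j) = rvmult (\<beta>$j) (\<mu> j)"
      and nm: "\<forall>j. rmult (\<nu> j) (\<mu> j) = rone" and cnz: "\<forall>j. c j \<noteq> 0"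
      and main: "\<forall>j s. f (axis j s) = axis (\<sigma> j) (pw s (\<nu> j) * c j)"
      using forward[OF fa fa' du du' hf eq] by blast
    have df: "\<And>x. f differentiable (at x)" using sf unfolding smooth_def
      by (metis Ck.simps(2))
    have dh: "\<And>x. h differentiable (at x)" using sh unfolding smooth_def
      by (metis Ck.simps(2))
    have "\<beta>'$(\<sigma> i) = \<beta>$i \<or> \<beta>'$(\<sigma> i) = rvmult (\<beta>$i) mu0" for i
    proof -
      have f1: "fst (\<nu> i) = 1"
        by (rule fst_one[OF df dh hf, of i "\<sigma> i" "\<nu> i" "c i"]) (use main cnz in auto)
      have sv: "snd (\<nu> i) * snd (\<mu> i) = 1" using nm[rule_format, of i] by (simp add: rmult_def rone_def)
      then have "snd (\<nu> i) = 1 \<or> snd (\<nu> i) = -1" using zmult_eq_1_iff by auto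
      then have "\<nu> i = rone \<or> \<nu> i = mu0" using f1 by (auto simp: rone_def mu0_def prod_eq_iff)
      then show ?thesis
      proof
        assume "\<nu> i = rone"
        then have "\<mu> i = rone" using nm[rule_format, of i] by simp
        then show ?thesis using beq by (simp add: rvmult_rone)
      next
        assume n0: "\<nu> i = mu0"
        have "\<mu> i = rmult (rmult mu0 mu0) (\<mu> i)" by (simp add: mu0_mu0)
        also have "\<dots> = mu0" using nm[rule_format, of i] n0 by (simp add: rmult_assoc)
        finally show ?thesis using beq by simp
      qed
    qed
    then show ?thesis using perm by blast
  qed
  show "\<exists>\<sigma> \<mu>. \<sigma> permutes (UNIV :: 'n set) \<and>
              (\<forall>i. \<mu> i \<in> Sset \<and> \<beta>'$(\<sigma> i) = rvmult (\<beta>$i) (\<mu> i))"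
    if eh: "equiv_homeomorphic \<alpha> \<alpha>'"
  proof -
    obtain f h where hm: "homeomorphism UNIV UNIV f h" and eq: "equivariant \<alpha> \<alpha>' f"
      using eh unfolding equiv_homeomorphic_def by blast
    have hf: "\<And>x. h (f x) = x" and cf: "continuous_on UNIV f"
      using hm unfolding homeomorphism_def by auto
    obtain \<sigma> \<nu> \<mu> c where perm: "\<sigma> permutes UNIV" and beq: "\<forall>j. \<beta>'$(\<sigma> j) = rvmult (\<beta>$j) (\<mu> j)"
      and nm: "\<forall>j. rmult (\<nu> j) (\<mu> j) = rone" and cnz: "\<forall>j. c j \<noteq> 0"
      and main: "\<forall>j s. f (axis j s) = axis (\<sigma> j) (pw s (\<nu> j) * c j)"
      using forward[OF fa fa' du du' hf eq] by blast
    have "\<mu> i \<in> Sset" for i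
    proof -
      have p: "Re (fst (\<nu> i)) > 0"
        by (rule pos_re[OF cf, of i "\<sigma> i" "\<nu> i" "c i"]) (use main cnz in auto)
      have r: "Re (fst (\<nu> i)) * Re (fst (\<mu> i)) = 1" and sv: "snd (\<nu> i) * snd (\<mu> i) = 1"
        using nm[rule_format, of i] by (auto simp: rmult_def rone_def complex_eq_iff)
      have "Re (fst (\<mu> i)) > 0" using p r by (metis zero_less_mult_pos zero_less_one)
      moreover have "snd (\<mu> i) = 1 \<or> snd (\<mu> i) = -1" using sv zmult_eq_1_iff by auto
      ultimately show ?thesis by (simp add: Sset_def)
    qed
    then show ?thesis using perm beq by blast
  qed
qed

end
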